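(* For every integer $n\ge0$, $b(3n)$ is odd if $n=2k(3k+1)$ for some integer $k$ (in which case $b(3n)\equiv(-1)^k\pmod 2$), and $b(3n)\equiv 0\pmod 2$ otherwise.
   Context: $f_m:=(q^m;q^m)_\infty=\prod_{j\ge1}(1-q^{mj})$. The mock theta function $\mathcal{B}(q)=\sum_{n\ge0}\frac{q^n(-q;q^2)_n}{(q;q^2)_{n+1}}=\sum_{n\ge0}b(n)q^n$, where $(a;q)_n=\prod_{j=0}^{n-1}(1-aq^j)$. *)

theory Defs
  imports "HOL-Computational_Algebra.Formal_Power_Series"
begin

text \<open>1/(1 - q^d) as a formal power series over the integers (geometric series, d \<ge> 1).\<close>
definition geom_inv :: "nat \<Rightarrow> int fps" where
  "geom_inv d = Abs_fps (\<lambda>i. if d dvd i then 1 else 0)"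

text \<open>The n-th summand q^n (-q;q^2)_n / (q;q^2)_{n+1} of the mock theta function B(q).\<close>
definition B_term :: "nat \<Rightarrow> int fps" where
  "B_term n = fps_X ^ n * (\<Prod>j<n. 1 + fps_X ^ (2*j+1)) * (\<Prod>j\<in>{..n}. geom_inv (2*j+1))"

text \<open>b(m): coefficient of q^m in B(q); only summands n \<le> m contribute (factor q^n).\<close>
definition b :: "nat \<Rightarrow> int" where
  "b m = fps_nth (\<Sum>n\<le>m. B_term n) m"

end

theory Submission
  imports Defs
begin

lemma geom_cancel:
  assumes "d \<ge> 1"
  shows "(1 - fps_X ^ d) * geom_inv d = 1"
proof (rule fps_ext)
  fix i
  show "fps_nth ((1 - fps_X ^ d) * geom_inv d) i = fps_nth (1 :: int fps) i"
  proof (cases "i = 0")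
    case True
    then show ?thesis using assms by (simp add: algebra_simps fps_X_power_mult_nth geom_inv_def)
  next
    case False
    have "d dvd i \<longleftrightarrow> d \<le> i \<and> d dvd (i - d)"
    proof
      assume "d dvd i" then show "d \<le> i \<and> d dvd (i - d)"
        using False by (simp add: dvd_imp_le dvd_diff_nat)
    next
      assume h: "d \<le> i \<and> d dvd (i - d)"
      then have "i = (i - d) + d" by simp
      then show "d dvd i" using h by (metis dvd_add dvd_refl)
    qed
    then show ?thesis using False assms
      by (auto simp add: algebra_simps fps_X_power_mult_nth geom_inv_def)
  qed
qed

lemma prod_mod2:
  fixes u v :: "nat \<Rightarrow> int fps"
  assumes "finite A"
  shows "\<exists>G. (\<Prod>j\<in>A. u j + 2 * v j) = (\<Prod>j\<in>A. u j) + 2 * G"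
  using assms
proof (induction A rule: finite_induct)
  case empty
  then show ?case by (intro exI[of _ 0]) simp
next
  case (insert x F)
  then obtain G where G: "(\<Prod>j\<in>F. u j + 2 * v j) = (\<Prod>j\<in>F. u j) + 2 * G" by blast
  have "(\<Prod>j\<in>insert x F. u j + 2 * v j) = (u x + 2 * v x) * ((\<Prod>j\<in>F. u j) + 2 * G)"
    using insert G by simp
  also have "\<dots> = (\<Prod>j\<in>insert x F. u j) + 2 * (u x * G + v x * (\<Prod>j\<in>F. u j) + 2 * v x * G)"
    using insert by (simp add: algebra_simps)
  finally show ?case by blast
qed

lemma B_term_mod2:
  "\<exists>G. B_term n = fps_X ^ n * geom_inv (2*n+1) + 2 * G"
proof -
  obtain G where G: "(\<Prod>j<n. (1 - fps_X ^ (2*j+1)) + 2 * fps_X ^ (2*j+1)) =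
      (\<Prod>j<n. (1 - fps_X ^ (2*j+1) :: int fps)) + 2 * G"
    using prod_mod2[of "{..<n}" "\<lambda>j. 1 - fps_X ^ (2*j+1)" "\<lambda>j. fps_X ^ (2*j+1)"] by auto
  have P: "(\<Prod>j<n. 1 + fps_X ^ (2*j+1)) = (\<Prod>j<n. (1 - fps_X ^ (2*j+1) :: int fps)) + 2 * G"
    using G by (simp add: algebra_simps)
  have Q: "(\<Prod>j\<in>{..n}. geom_inv (2*j+1)) = (\<Prod>j<n. geom_inv (2*j+1)) * geom_inv (2*n+1)"
    by (simp add: lessThan_Suc_atMost[symmetric])
  have PQ: "(\<Prod>j<n. (1 - fps_X ^ (2*j+1) :: int fps)) * (\<Prod>j<n. geom_inv (2*j+1)) = 1"
  proof -
    have "\<And>j. (1 - fps_X ^ (2*j+1) :: int fps) * geom_inv (2*j+1) = 1"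
      by (rule geom_cancel) simp
    then show ?thesis by (simp only: prod.distrib[symmetric] prod.neutral_const)
  qed
  have "B_term n = fps_X ^ n * ((\<Prod>j<n. (1 - fps_X ^ (2*j+1) :: int fps)) * (\<Prod>j<n. geom_inv (2*j+1))) * geom_inv (2*n+1)
     + 2 * (fps_X ^ n * G * (\<Prod>j\<in>{..n}. geom_inv (2*j+1)))"
    unfolding B_term_def P Q by (simp add: algebra_simps)
  also have "\<dots> = fps_X ^ n * geom_inv (2*n+1) + 2 * (fps_X ^ n * G * (\<Prod>j\<in>{..n}. geom_inv (2*j+1)))"
    using PQ by simp
  finally show ?thesis by blast
qed

lemma nth_two_mult: "fps_nth ((2::int fps) * G) m = 2 * fps_nth G m"
  by (simp add: numeral_fps_const)

lemma b_mod2: "b m mod 2 = int (card {n. n \<le> m \<and> (2*n+1) dvd (m-n)}) mod 2"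
proof -
  have "\<forall>n. \<exists>G. B_term n = fps_X ^ n * geom_inv (2*n+1) + 2 * G"
    using B_term_mod2 by blast
  then obtain G where G: "\<And>n. B_term n = fps_X ^ n * geom_inv (2*n+1) + 2 * G n"
    by metis
  have c: "fps_nth (fps_X ^ n * geom_inv (2*n+1)) m = (if n \<le> m \<and> (2*n+1) dvd (m-n) then 1 else 0)" for n
    by (simp add: fps_X_power_mult_nth geom_inv_def)
  have "b m = (\<Sum>n\<le>m. fps_nth (fps_X ^ n * geom_inv (2*n+1)) m + 2 * fps_nth (G n) m)"
    unfolding b_def G by (simp only: fps_sum_nth fps_add_nth nth_two_mult)
  also have "\<dots> = (\<Sum>n\<le>m. (if n \<le> m \<and> (2*n+1) dvd (m-n) then 1 else 0)) + 2 * (\<Sum>n\<le>m. fps_nth (G n) m)"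
    by (simp only: c sum.distrib sum_distrib_left)
  also have "(\<Sum>n\<le>m. (if n \<le> m \<and> (2*n+1) dvd (m-n) then 1 else 0::int)) = int (card {n. n \<le> m \<and> (2*n+1) dvd (m-n)})"
    by (simp add: sum.If_cases atMost_def Int_def)
  finally show ?thesis by simp
qed

lemma key_dvd:
  assumes "n \<le> m"
  shows "(2*n+1) dvd (m-n) \<longleftrightarrow> (2*n+1) dvd (2*m+1::nat)"
proof -
  have e: "2*m+1 = 2*(m-n) + (2*n+1)" using assms by simp
  have "(2*n+1) dvd (2*(m-n) + (2*n+1)) \<longleftrightarrow> (2*n+1) dvd 2*(m-n)"
    by (rule dvd_add_left_iff) simp
  also have "\<dots> \<longleftrightarrow> (2*n+1) dvd (m-n)"
  proof -
    have "coprime (2*n+1) (2::nat)" by simp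
    then show ?thesis by (simp add: coprime_dvd_mult_right_iff)
  qed
  finally show ?thesis using e by simp
qed

lemma card_divisors:
  "card {n. n \<le> m \<and> (2*n+1) dvd (m-n)} = card {d. d dvd (2*m+1::nat)}"
proof -
  have inj: "inj_on (\<lambda>n. 2*n+1::nat) A" for A by (simp add: inj_on_def)
  have "(\<lambda>n. 2*n+1) ` {n. n \<le> m \<and> (2*n+1) dvd (m-n)} = {d. d dvd (2*m+1::nat)}"
  proof (intro equalityI subsetI)
    fix d assume "d \<in> (\<lambda>n. 2*n+1) ` {n. n \<le> m \<and> (2*n+1) dvd (m-n)}"
    then show "d \<in> {d. d dvd (2*m+1)}" using key_dvd by auto
  next
    fix d assume "d \<in> {d. d dvd (2*m+1::nat)}"
    then have d: "d dvd 2*m+1" by simp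
    then have "odd d" using dvd_trans[of 2 d "2*m+1"] by auto
    then have d2: "d = 2*(d div 2)+1" by simp
    have "d \<le> 2*m+1" using d by (simp add: dvd_imp_le)
    then have le: "d div 2 \<le> m" by simp
    then have "(2*(d div 2)+1) dvd (m - d div 2)" using key_dvd[OF le] d d2 by simp
    then show "d \<in> (\<lambda>n. 2*n+1) ` {n. n \<le> m \<and> (2*n+1) dvd (m-n)}"
      using le d2 by (intro image_eqI[of _ _ "d div 2"]) auto
  qed
  moreover have "card ((\<lambda>n. 2*n+1) ` {n. n \<le> m \<and> (2*n+1) dvd (m-n)}) = card {n. n \<le> m \<and> (2*n+1) dvd (m-n)}"
    by (rule card_image[OF inj])
  ultimately show ?thesis by simp
qed

lemma sq_inj: assumes "(d::nat) * d = e * e" shows "d = e"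
proof (rule ccontr)
  assume "d \<noteq> e"
  then have "d < e \<or> e < d" by arith
  then have "d * d < e * e \<or> e * e < d * d"
    by (auto intro: mult_strict_mono)
  then show False using assms by simp
qed

lemma div_parity:
  fixes N :: nat
  assumes N: "N > 0"
  shows "odd (card {d. d dvd N}) \<longleftrightarrow> (\<exists>s. N = s*s)"
proof -
  define D where "D = {d. d dvd N}"
  define A where "A = {d\<in>D. d*d < N}"
  define B where "B = {d\<in>D. d*d = N}"
  define C where "C = {d\<in>D. d*d > N}"
  have fD: "finite D" unfolding D_def using N by simp
  have fA: "finite A" "finite B" "finite C" using fD unfolding A_def B_def C_def by auto
  have DU: "D = A \<union> B \<union> C" unfolding A_def B_def C_def by auto
  have cD: "card D = card A + card B + card C"
  proof -
    have 1: "card (A \<union> B) = card A + card B"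
      by (rule card_Un_disjoint) (use fA in \<open>auto simp: A_def B_def\<close>)
    have 2: "card ((A \<union> B) \<union> C) = card (A \<union> B) + card C"
      by (rule card_Un_disjoint) (use fA in \<open>auto simp: A_def B_def C_def\<close>)
    show ?thesis unfolding DU using 1 2 by simp
  qed
  have inj: "inj_on (\<lambda>d. N div d) D"
  proof (rule inj_onI)
    fix x y assume x: "x \<in> D" and y: "y \<in> D" and e: "N div x = N div y"
    have "x dvd N" "y dvd N" using x y unfolding D_def by auto
    then have h: "N div (N div x) = x" "N div (N div y) = y" using N
      by (auto simp add: div_div_eq_right dvd_div_mult_self)
    have "x = N div (N div x)" using h(1) by simp
    also have "\<dots> = N div (N div y)" using e by simp
    also have "\<dots> = y" using h(2) by simp
    finally show "x = y" .
  qed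
  have mAC: "N div d \<in> C" if "d \<in> A" for d
  proof -
    have d: "d dvd N" "d*d < N" using that unfolding A_def D_def by auto
    obtain e where e: "N = d * e" using d by blast
    have "d > 0" using N e by (cases "d = 0") auto
    have ed: "N div d = e" using e \<open>d > 0\<close> by simp
    have "d < e" using d e by simp
    then have "d * e < e * e" by (simp add: mult_strict_right_mono)
    then show ?thesis unfolding C_def D_def using e ed by auto
  qed
  have mCA: "N div d \<in> A" if "d \<in> C" for d
  proof -
    have d: "d dvd N" "d*d > N" using that unfolding C_def D_def by auto
    obtain e where e: "N = d * e" using d by blast
    have "d > 0" using N e by (cases "d = 0") auto
    have ed: "N div d = e" using e \<open>d > 0\<close> by simp
    have "e > 0" using N e by (cases "e = 0") auto
    have "e < d" using d e \<open>d > 0\<close> by (simp add: mult.commute)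
    then have "e * e < d * e" using \<open>e > 0\<close> by (simp add: mult_strict_right_mono)
    then show ?thesis unfolding A_def D_def using e ed by auto
  qed
  have "card A \<le> card C"
  proof (rule card_inj_on_le[of "\<lambda>d. N div d"])
    show "inj_on (\<lambda>d. N div d) A" by (rule inj_on_subset[OF inj]) (simp add: A_def)
    show "(\<lambda>d. N div d) ` A \<subseteq> C" using mAC by blast
    show "finite C" by (rule fA(3))
  qed
  moreover have "card C \<le> card A"
  proof (rule card_inj_on_le[of "\<lambda>d. N div d"])
    show "inj_on (\<lambda>d. N div d) C" by (rule inj_on_subset[OF inj]) (simp add: C_def)
    show "(\<lambda>d. N div d) ` C \<subseteq> A" using mCA by blast
    show "finite A" by (rule fA(1))
  qed
  ultimately have AC: "card A = card C" by simp
  have cB: "card B = (if \<exists>s. N = s*s then 1 else 0)"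
  proof (cases "\<exists>s. N = s*s")
    case True
    then obtain s where s: "N = s*s" by blast
    have "B = {s}"
    proof (intro equalityI subsetI)
      fix x assume "x \<in> B"
      then have "x * x = s * s" unfolding B_def using s by simp
      then show "x \<in> {s}" using sq_inj by blast
    next
      fix x assume "x \<in> {s}"
      then show "x \<in> B" unfolding B_def D_def using s by simp
    qed
    then show ?thesis using True by simp
  next
    case False
    then have "B = {}" unfolding B_def by auto
    then show ?thesis using False by simp
  qed
  show ?thesis using cD AC cB unfolding D_def by auto
qed

lemma b_odd_iff: "odd (b m) \<longleftrightarrow> (\<exists>s. 2*m+1 = s*s)"
proof -
  have "odd (b m) \<longleftrightarrow> b m mod 2 = 1" by presburger
  also have "\<dots> \<longleftrightarrow> int (card {d. d dvd (2*m+1::nat)}) mod 2 = 1"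
    using b_mod2[of m] card_divisors[of m] by simp
  also have "\<dots> \<longleftrightarrow> odd (card {d. d dvd (2*m+1::nat)})" by presburger
  also have "\<dots> \<longleftrightarrow> (\<exists>s. 2*m+1 = s*s)" by (rule div_parity) simp
  finally show ?thesis .
qed

lemma sq_form: "(\<exists>s::nat. 2*(3*n)+1 = s*s) \<longleftrightarrow> (\<exists>k::int. int n = 2*k*(3*k+1))"
proof
  assume "\<exists>s::nat. 2*(3*n)+1 = s*s"
  then obtain s :: nat where s: "2*(3*n)+1 = s*s" by blast
  define t where "t = int s"
  have t: "6 * int n + 1 = t * t" unfolding t_def using arg_cong[OF s, of int] by simp
  define q where "q = t div 6"
  define r where "r = t mod 6"
  have tq: "t = 6*q + r" unfolding q_def r_def by simp
  have r: "0 \<le> r" "r < 6" unfolding r_def by auto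
  have "(t*t) mod 6 = 1" unfolding t[symmetric] by simp
  then have "(r*r) mod 6 = 1" unfolding r_def by (metis mod_mult_eq)
  then have "r = 1 \<or> r = 5" using r
    by (cases "r = 0"; cases "r = 1"; cases "r = 2"; cases "r = 3"; cases "r = 4"; auto)
  then show "\<exists>k::int. int n = 2*k*(3*k+1)"
  proof
    assume "r = 1"
    then have "6 * int n + 1 = (6*q+1)*(6*q+1)" using t tq by simp
    then have "int n = 2*q*(3*q+1)" by (simp add: algebra_simps)
    then show ?thesis by blast
  next
    assume "r = 5"
    then have "6 * int n + 1 = (6*q+5)*(6*q+5)" using t tq by simp
    then have "int n = 2*(-(q+1))*(3*(-(q+1))+1)" by (simp add: algebra_simps)
    then show ?thesis by blast
  qed
next
  assume "\<exists>k::int. int n = 2*k*(3*k+1)"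
  then obtain k where k: "int n = 2*k*(3*k+1)" by blast
  define s where "s = nat \<bar>6*k+1\<bar>"
  have "int s * int s = (6*k+1)*(6*k+1)" unfolding s_def
    by simp
  also have "\<dots> = int (2*(3*n)+1)" using k by (simp add: algebra_simps)
  finally have "int (s*s) = int (2*(3*n)+1)" by simp
  then have "2*(3*n)+1 = s*s" by (simp only: of_nat_eq_iff)
  then show "\<exists>s::nat. 2*(3*n)+1 = s*s" by blast
qed

theorem mainTheorem2:
  fixes n :: nat
  shows "((\<exists>k::int. int n = 2*k*(3*k+1)) \<longrightarrow>
            odd (b (3*n)) \<and>
            (\<forall>k::int. int n = 2*k*(3*k+1) \<longrightarrow> b (3*n) mod 2 = ((-1) ^ nat \<bar>k\<bar>) mod 2))
       \<and> ((\<not> (\<exists>k::int. int n = 2*k*(3*k+1))) \<longrightarrow> b (3*n) mod 2 = 0)"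
proof -
  have E: "odd (b (3*n)) \<longleftrightarrow> (\<exists>k::int. int n = 2*k*(3*k+1))"
    using b_odd_iff[of "3*n"] sq_form[of n] by simp
  have m1: "((-1::int) ^ j) mod 2 = 1" for j
    by (cases "even j") (simp_all add: minus_one_power_iff)
  have o: "odd x \<Longrightarrow> x mod 2 = 1" "\<not> odd x \<Longrightarrow> x mod 2 = 0" for x :: int
    by presburger+
  show ?thesis
  proof (intro conjI impI allI)
    assume "\<exists>k::int. int n = 2*k*(3*k+1)"
    then show "odd (b (3*n))" using E by blast
  next
    fix k :: int
    assume "\<exists>k::int. int n = 2*k*(3*k+1)"
    then have "odd (b (3*n))" using E by blast
    then have "b (3*n) mod 2 = 1" using o(1) by blast
    then show "b (3*n) mod 2 = ((-1) ^ nat \<bar>k\<bar>) mod 2" using m1[of "nat \<bar>k\<bar>"] by simp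
  next
    assume "\<not> (\<exists>k::int. int n = 2*k*(3*k+1))"
    then have "\<not> odd (b (3*n))" using E by blast
    then show "b (3*n) mod 2 = 0" using o(2) by blast
  qed
qed

end
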